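(* Let $\mathcal D$ be a distribution over $\mathcal X\times\{0,1\}$ with $\Pr_{(x,y)\sim\mathcal D}[y=0]\in[1/2-b_1,1/2+b_1]$ for some $b_1>0$. Let $\mathcal D_{\mathrm{shift}}$ be a distribution over $\mathcal X\times\{0,1\}$ whose class-conditional distributions equal those of $\mathcal D$, i.e., $\mathcal D_{\mathrm{shift}}(\cdot\mid Y=y)=\mathcal D(\cdot\mid Y=y)$ for all $y\in\{0,1\}$, and with $\Pr_{(x,y)\sim\mathcal D_{\mathrm{shift}}}[y=0]\in[1/2+b_2,1/2+b_3]$ for $b_1<b_2<b_3<1/2$. Let $h:\mathcal X\to\{0,1\}$ satisfy $\ell_{\mathcal D_{\mathrm{shift}}}(h):=\Pr_{(x,y)\sim\mathcal D_{\mathrm{shift}}}[h(x)\ne y]\le\Pr_{(x,y)\sim\mathcal D_{\mathrm{shift}}}[y=1]/2$. Then $\ell_{\mathcal D}(h):=\Pr_{(x,y)\sim\mathcal D}[h(x)\ne y]\le1/4+b_1/2$. *)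

theory Defs
  imports "HOL-Probability.Probability"
begin

text \<open>Distributions over X \<times> {0,1} are probability measures on X \<Otimes> count_space UNIV,
 labels encoded as bool (False = 0, True = 1).\<close>

definition label_prob :: "('a \<times> bool) measure \<Rightarrow> bool \<Rightarrow> real" where
  "label_prob D y = measure D {z \<in> space D. snd z = y}"

definition cond_prob :: "('a \<times> bool) measure \<Rightarrow> 'a set \<Rightarrow> bool \<Rightarrow> real" where
  "cond_prob D A y = measure D {z \<in> space D. fst z \<in> A \<and> snd z = y} / label_prob D y"

definition err :: "('a \<times> bool) measure \<Rightarrow> ('a \<Rightarrow> bool) \<Rightarrow> real" where
  "err D h = measure D {z \<in> space D. h (fst z) \<noteq> snd z}"

end

theory Submission
  imports Defs
begin

lemma compl_lab:
  fixes X :: "'a measure" and M :: "('a \<times> bool) measure"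
  assumes ps: "prob_space M" and sM: "sets M = sets (X \<Otimes>\<^sub>M count_space UNIV)"
  shows "label_prob M True = 1 - label_prob M False"
proof -
  interpret prob_space M by (rule ps)
  have sp: "space M = space X \<times> UNIV"
    using sets_eq_imp_space_eq[OF sM] by (simp add: space_pair_measure)
  have L0: "{z \<in> space M. snd z = False} = space X \<times> {False}" using sp by auto
  have L1: "{z \<in> space M. snd z = True} = space X \<times> {True}" using sp by auto
  have L0m: "space X \<times> {False} \<in> sets M" unfolding sM by (intro pair_measureI) auto
  have "space X \<times> {True} = space M - space X \<times> {False}" using sp by auto
  then show "label_prob M True = 1 - label_prob M False"
    unfolding label_prob_def L0 L1 using prob_compl[OF L0m] by simp
qed

lemma decomp:
  fixes X :: "'a measure" and M :: "('a \<times> bool) measure" and h :: "'a \<Rightarrow> bool"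
  assumes ps: "prob_space M" and sM: "sets M = sets (X \<Otimes>\<^sub>M count_space UNIV)"
    and hm: "h \<in> X \<rightarrow>\<^sub>M count_space UNIV"
    and p0: "label_prob M False \<noteq> 0" and p1: "label_prob M True \<noteq> 0"
  shows "err M h = cond_prob M {x\<in>space X. h x} False * label_prob M False
     + cond_prob M {x\<in>space X. \<not> h x} True * label_prob M True"
    and "label_prob M True = 1 - label_prob M False"
    and "cond_prob M {x\<in>space X. h x} False \<ge> 0"
    and "cond_prob M {x\<in>space X. \<not> h x} True \<ge> 0"
    and "label_prob M False \<ge> 0"
proof -
  interpret prob_space M by (rule ps)
  have sp: "space M = space X \<times> UNIV"
    using sets_eq_imp_space_eq[OF sM] by (simp add: space_pair_measure)
  define A where "A = {x\<in>space X. h x}"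
  define A' where "A' = {x\<in>space X. \<not> h x}"
  have A: "A \<in> sets X" unfolding A_def using hm by measurable
  have A': "A' \<in> sets X" unfolding A'_def using hm by measurable
  have S0: "{z \<in> space M. fst z \<in> A \<and> snd z = False} = A \<times> {False}"
    using sp A_def by auto
  have S1: "{z \<in> space M. fst z \<in> A' \<and> snd z = True} = A' \<times> {True}"
    using sp A'_def by auto
  have S0m: "A \<times> {False} \<in> sets M" unfolding sM using A by (intro pair_measureI) auto
  have S1m: "A' \<times> {True} \<in> sets M" unfolding sM using A' by (intro pair_measureI) auto
  have L0: "{z \<in> space M. snd z = False} = space X \<times> {False}" using sp by auto
  have L1: "{z \<in> space M. snd z = True} = space X \<times> {True}" using sp by auto
  have L0m: "space X \<times> {False} \<in> sets M" unfolding sM by (intro pair_measureI) auto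
  have L1m: "space X \<times> {True} \<in> sets M" unfolding sM by (intro pair_measureI) auto
  have E: "{z \<in> space M. h (fst z) \<noteq> snd z} = A \<times> {False} \<union> A' \<times> {True}"
    using sp A_def A'_def by auto
  have "err M h = measure M (A \<times> {False}) + measure M (A' \<times> {True})"
    unfolding err_def E by (rule finite_measure_Union[OF S0m S1m]) auto
  then show "err M h = cond_prob M {x\<in>space X. h x} False * label_prob M False
     + cond_prob M {x\<in>space X. \<not> h x} True * label_prob M True"
    using p0 p1 unfolding cond_prob_def A_def[symmetric] A'_def[symmetric] S0 S1 by simp
  have "space X \<times> {True} = space M - space X \<times> {False}" using sp by auto
  then show "label_prob M True = 1 - label_prob M False"
    unfolding label_prob_def L0 L1 using prob_compl[OF L0m] by simp
  show "cond_prob M {x\<in>space X. h x} False \<ge> 0" "cond_prob M {x\<in>space X. \<not> h x} True \<ge> 0"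
    "label_prob M False \<ge> 0"
    unfolding cond_prob_def label_prob_def by simp_all
qed

theorem lemma10p8:
  fixes X :: "'a measure" and D Ds :: "('a \<times> bool) measure"
    and h :: "'a \<Rightarrow> bool" and b1 b2 b3 :: real
  assumes "prob_space D" and "prob_space Ds"
    and "sets D = sets (X \<Otimes>\<^sub>M count_space UNIV)"
    and "sets Ds = sets (X \<Otimes>\<^sub>M count_space UNIV)"
    and "b1 > 0" and "b1 < b2" and "b2 < b3" and "b3 < 1/2"
    and "1/2 - b1 \<le> label_prob D False" and "label_prob D False \<le> 1/2 + b1"
    and "1/2 + b2 \<le> label_prob Ds False" and "label_prob Ds False \<le> 1/2 + b3"
    and "\<forall>A \<in> sets X. \<forall>y. cond_prob Ds A y = cond_prob D A y"
    and "h \<in> X \<rightarrow>\<^sub>M count_space UNIV"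
    and "err Ds h \<le> label_prob Ds True / 2"
  shows "err D h \<le> 1/4 + b1/2"
proof -
  have A: "{x\<in>space X. h x} \<in> sets X" using assms(14) by measurable
  have A': "{x\<in>space X. \<not> h x} \<in> sets X" using assms(14) by measurable
  define e0 where "e0 = cond_prob D {x\<in>space X. h x} False"
  define e1 where "e1 = cond_prob D {x\<in>space X. \<not> h x} True"
  define p where "p = label_prob D False"
  define q where "q = label_prob Ds False"
  have lt: "label_prob Ds True = 1 - q"
    using compl_lab[OF assms(2,4)] assms unfolding q_def by simp
  have lD: "label_prob D True = 1 - p"
    using compl_lab[OF assms(1,3)] assms unfolding p_def by simp
  have eD: "err D h = e0 * p + e1 * (1 - p)"
    using decomp(1)[OF assms(1,3,14)] assms lD unfolding e0_def e1_def p_def by simp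
  have eDs: "err Ds h = e0 * q + e1 * (1 - q)"
    using decomp(1)[OF assms(2,4,14)] assms lt A A' unfolding e0_def e1_def q_def by simp
  have g0: "e0 \<ge> 0" "e1 \<ge> 0"
    using decomp(3,4)[OF assms(1,3,14)] assms lD unfolding e0_def e1_def p_def by simp_all
  have hq: "q > 1/2" "q < 1" using assms unfolding q_def by simp_all
  have hp: "p \<ge> 1/2 - b1" "p \<le> 1/2 + b1" "b1 < 1/2" using assms unfolding p_def by simp_all
  have c: "e0 * q + e1 * (1 - q) \<le> (1 - q) / 2" using eDs lt assms(15) by simp
  have e1h: "e1 \<le> 1/2"
  proof (rule ccontr)
    assume "\<not> e1 \<le> 1/2"
    hence "e1 * (1 - q) > 1/2 * (1 - q)" using hq by (intro mult_strict_right_mono) auto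
    moreover have "e0 * q \<ge> 0" using g0 hq by simp
    ultimately show False using c by simp
  qed
  have "e0 * q \<le> (1 - q) * (1/2 - e1)" using c by (simp add: field_simps)
  also have "\<dots> \<le> q * (1/2 - e1)" using hq e1h by (intro mult_right_mono) auto
  finally have "q * e0 \<le> q * (1/2 - e1)" by (simp add: mult.commute)
  hence "e0 \<le> 1/2 - e1" using hq by (simp add: mult_le_cancel_left_pos)
  hence s: "e0 + e1 \<le> 1/2" by simp
  have "e0 * p \<le> e0 * (1/2 + b1)" using g0 hp by (intro mult_left_mono) auto
  moreover have "e1 * (1 - p) \<le> e1 * (1/2 + b1)" using g0 hp by (intro mult_left_mono) auto
  moreover have "(e0 + e1) * (1/2 + b1) \<le> 1/2 * (1/2 + b1)" using s hp by (intro mult_right_mono) auto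
  ultimately have "e0 * p + e1 * (1 - p) \<le> 1/2 * (1/2 + b1)"
    using distrib_right[of e0 e1 "1/2 + b1"] by linarith
  thus ?thesis using eD by simp
qed

end
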